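(* Let $(S,d)$ be a finite metric space partitioned into two disjoint groups $S=S_1\cup S_2$, let $k_1,k_2$ be nonnegative integers with $k=k_1+k_2$, and let $r^*$ be the optimal radius of the fair $k$-center problem on this instance. For $l\in\{1,2\}$ let $\Gamma_l\subseteq S_l$ be a $2r^*$-independent center set of $S_l$, and suppose $|\Gamma_1|>k_1$ and $|\Gamma_2|>k_2$. Run Phase 1 (described in the context) on $\Gamma_1,\Gamma_2$. Then when Phase 1 completes, the resulting set $C$ satisfies $|C\cap S_l|\le k_l$ for each $l\in\{1,2\}$.
   Context: The fair $k$-center problem: a set $C\subseteq S$ is feasible if $|C\cap S_l|\le k_l$ for each $l$; its cost is $\max_{s\in S}d(s,C)$ with $d(s,C)=\min_{c\in C}d(s,c)$ and $d(s,\emptyset)=\infty$. The optimal radius $r^*$ is the minimum cost over feasible $C$. For $T\subseteq S$, a set $\Gamma\subseteq T$ is a $\lambda$-independent center set of $T$ if (1) $d(p,q)>\lambda$ for any two distinct $p,q\in\Gamma$, and (2) every $p\in T$ has some $q\in\Gamma$ with $d(p,q)\le\lambda$. Phase 1: set $C\leftarrow\emptyset$; build the bipartite auxiliary graph $G$ with vertex set $\Gamma_1\cup\Gamma_2$ in which $p\in\Gamma_1$ and $q\in\Gamma_2$ are joined by an edge iff $d(p,q)\le 3r^*$ (no other edges); then, for each vertex $i$ of degree $0$ in $G$ (in any order), if $d(C,i)>2r^*$ add $i$ to $C$; finally remove all degree-$0$ vertices from $G$. *)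

theory Defs
  imports "HOL-Library.Extended_Real"
begin

definition metric_on :: "'a set \<Rightarrow> ('a \<Rightarrow> 'a \<Rightarrow> real) \<Rightarrow> bool" where
  "metric_on S d \<longleftrightarrow>
     (\<forall>x\<in>S. d x x = 0) \<and>
     (\<forall>x\<in>S. \<forall>y\<in>S. x \<noteq> y \<longrightarrow> d x y > 0) \<and>
     (\<forall>x\<in>S. \<forall>y\<in>S. d x y = d y x) \<and>
     (\<forall>x\<in>S. \<forall>y\<in>S. \<forall>z\<in>S. d x z \<le> d x y + d y z)"

text \<open>Distance from a point to a set; the empty set is at distance infinity.\<close>
definition dist_set :: "('a \<Rightarrow> 'a \<Rightarrow> real) \<Rightarrow> 'a \<Rightarrow> 'a set \<Rightarrow> ereal" where
  "dist_set d s C = (INF c\<in>C. ereal (d s c))"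

definition fair_feasible :: "'a set \<Rightarrow> 'a set \<Rightarrow> nat \<Rightarrow> 'a set \<Rightarrow> nat \<Rightarrow> 'a set \<Rightarrow> bool" where
  "fair_feasible S S1 k1 S2 k2 C \<longleftrightarrow> C \<subseteq> S \<and> card (C \<inter> S1) \<le> k1 \<and> card (C \<inter> S2) \<le> k2"

definition kcenter_cost :: "('a \<Rightarrow> 'a \<Rightarrow> real) \<Rightarrow> 'a set \<Rightarrow> 'a set \<Rightarrow> ereal" where
  "kcenter_cost d S C = (SUP s\<in>S. dist_set d s C)"

definition opt_radius ::
  "('a \<Rightarrow> 'a \<Rightarrow> real) \<Rightarrow> 'a set \<Rightarrow> 'a set \<Rightarrow> nat \<Rightarrow> 'a set \<Rightarrow> nat \<Rightarrow> ereal" where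
  "opt_radius d S S1 k1 S2 k2 =
     (INF C\<in>{C. fair_feasible S S1 k1 S2 k2 C}. kcenter_cost d S C)"

definition independent_center_set ::
  "('a \<Rightarrow> 'a \<Rightarrow> real) \<Rightarrow> ereal \<Rightarrow> 'a set \<Rightarrow> 'a set \<Rightarrow> bool" where
  "independent_center_set d lam T \<Gamma> \<longleftrightarrow>
     \<Gamma> \<subseteq> T \<and>
     (\<forall>p\<in>\<Gamma>. \<forall>q\<in>\<Gamma>. p \<noteq> q \<longrightarrow> ereal (d p q) > lam) \<and>
     (\<forall>p\<in>T. \<exists>q\<in>\<Gamma>. ereal (d p q) \<le> lam)"

definition aux_edge ::
  "('a \<Rightarrow> 'a \<Rightarrow> real) \<Rightarrow> ereal \<Rightarrow> 'a set \<Rightarrow> 'a set \<Rightarrow> 'a \<Rightarrow> 'a \<Rightarrow> bool" where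
  "aux_edge d r \<Gamma>1 \<Gamma>2 u v \<longleftrightarrow>
     (u \<in> \<Gamma>1 \<and> v \<in> \<Gamma>2 \<and> ereal (d u v) \<le> 3 * r) \<or>
     (v \<in> \<Gamma>1 \<and> u \<in> \<Gamma>2 \<and> ereal (d v u) \<le> 3 * r)"

definition isolated_vertices ::
  "('a \<Rightarrow> 'a \<Rightarrow> real) \<Rightarrow> ereal \<Rightarrow> 'a set \<Rightarrow> 'a set \<Rightarrow> 'a set" where
  "isolated_vertices d r \<Gamma>1 \<Gamma>2 =
     {i \<in> \<Gamma>1 \<union> \<Gamma>2. \<not> (\<exists>j\<in>\<Gamma>1 \<union> \<Gamma>2. aux_edge d r \<Gamma>1 \<Gamma>2 i j)}"

definition phase1_step :: "('a \<Rightarrow> 'a \<Rightarrow> real) \<Rightarrow> ereal \<Rightarrow> 'a \<Rightarrow> 'a set \<Rightarrow> 'a set" where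
  "phase1_step d r i C = (if (INF c\<in>C. ereal (d c i)) > 2 * r then insert i C else C)"

text \<open>Phase 1 processing the degree-0 vertices in the order given by the list.\<close>
definition phase1 :: "('a \<Rightarrow> 'a \<Rightarrow> real) \<Rightarrow> ereal \<Rightarrow> 'a list \<Rightarrow> 'a set" where
  "phase1 d r xs = fold (phase1_step d r) xs {}"

end

theory Submission
  imports Defs
begin

lemma ereal_INF_attained:
  fixes f :: "'b \<Rightarrow> ereal"
  assumes "finite A" "A \<noteq> {}"
  shows "\<exists>x\<in>A. (INF y\<in>A. f y) = f x"
proof -
  have "Inf (f ` A) \<in> f ` A"
    by (rule finite_Inf_in) (use assms in \<open>auto simp: inf_min min_def\<close>)
  then show ?thesis by auto
qed

lemma phase1_inv:
  assumes "\<forall>x\<in>Z. \<forall>y\<in>Z. x \<noteq> y \<longrightarrow> ereal (d x y) > 2*r \<or> ereal (d y x) > 2*r"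
  shows "(\<forall>x\<in>fold (phase1_step d r) xs Z. \<forall>y\<in>fold (phase1_step d r) xs Z.
            x \<noteq> y \<longrightarrow> ereal (d x y) > 2*r \<or> ereal (d y x) > 2*r)
         \<and> fold (phase1_step d r) xs Z \<subseteq> Z \<union> set xs"
  using assms
proof (induction xs arbitrary: Z)
  case Nil
  then show ?case by simp
next
  case (Cons i xs)
  have "\<forall>x\<in>phase1_step d r i Z. \<forall>y\<in>phase1_step d r i Z.
            x \<noteq> y \<longrightarrow> ereal (d x y) > 2*r \<or> ereal (d y x) > 2*r"
  proof (cases "(INF c\<in>Z. ereal (d c i)) > 2 * r")
    case True
    have "\<forall>c\<in>Z. ereal (d c i) > 2*r"
    proof
      fix c assume "c \<in> Z"
      then have "(INF c\<in>Z. ereal (d c i)) \<le> ereal (d c i)" by (rule INF_lower)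
      with True show "ereal (d c i) > 2*r" by simp
    qed
    with Cons.prems True show ?thesis unfolding phase1_step_def by auto
  next
    case False
    with Cons.prems show ?thesis unfolding phase1_step_def by auto
  qed
  from Cons.IH[OF this] show ?case
    unfolding phase1_step_def by (auto split: if_splits)
qed

lemma side:
  fixes \<rho> :: real
  assumes met: "metric_on S d" and SAB: "S = A \<union> B" and CsS: "Cs \<subseteq> S" and fin: "finite S"
    and cover: "\<forall>s\<in>S. \<exists>c\<in>Cs. d s c \<le> \<rho>"
    and GB: "GB \<subseteq> S" and covB: "\<forall>p\<in>B. \<exists>q\<in>GB. d p q \<le> 2*\<rho>"
    and CS: "C \<subseteq> S" and far: "\<forall>i\<in>C\<inter>A. \<forall>q\<in>GB. d i q > 3*\<rho>"
    and sep: "\<forall>x\<in>C. \<forall>y\<in>C. x \<noteq> y \<longrightarrow> d x y > 2*\<rho> \<or> d y x > 2*\<rho>"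
    and k: "card (Cs \<inter> A) \<le> k"
  shows "card (C \<inter> A) \<le> k"
proof -
  from met have sym: "\<And>x y. x\<in>S \<Longrightarrow> y\<in>S \<Longrightarrow> d x y = d y x"
    and tri: "\<And>x y z. x\<in>S \<Longrightarrow> y\<in>S \<Longrightarrow> z\<in>S \<Longrightarrow> d x z \<le> d x y + d y z"
    unfolding metric_on_def by blast+
  define f where "f i = (SOME c. c \<in> Cs \<and> d i c \<le> \<rho>)" for i
  have fP: "f i \<in> Cs \<and> d i (f i) \<le> \<rho>" if "i \<in> S" for i
    unfolding f_def by (rule someI_ex) (use cover that in blast)
  have img: "f ` (C \<inter> A) \<subseteq> Cs \<inter> A"
  proof
    fix c assume "c \<in> f ` (C \<inter> A)"
    then obtain i where i: "i \<in> C \<inter> A" "c = f i" by auto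
    have iS: "i \<in> S" using i CS by auto
    have c: "c \<in> Cs" "d i c \<le> \<rho>" using fP[OF iS] i by auto
    have cS: "c \<in> S" using c CsS by auto
    have "c \<in> A"
    proof (rule ccontr)
      assume "c \<notin> A"
      then have "c \<in> B" using cS SAB by auto
      then obtain q where q: "q \<in> GB" "d c q \<le> 2*\<rho>" using covB by auto
      have qS: "q \<in> S" using q GB by auto
      have "d i q \<le> d i c + d c q" using tri[OF iS cS qS] .
      also have "\<dots> \<le> 3*\<rho>" using c q by simp
      finally have "d i q \<le> 3*\<rho>" .
      moreover have "d i q > 3*\<rho>" using far i(1) q(1) by blast
      ultimately show False by linarith
    qed
    with c show "c \<in> Cs \<inter> A" by auto
  qed
  have inj: "inj_on f (C \<inter> A)"
  proof (rule inj_onI, rule ccontr)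
    fix i j assume i: "i \<in> C \<inter> A" and j: "j \<in> C \<inter> A" and eq: "f i = f j" and ne: "i \<noteq> j"
    have iS: "i \<in> S" and jS: "j \<in> S" using i j CS by auto
    define c where "c = f i"
    have c: "c \<in> Cs" "d i c \<le> \<rho>" "d j c \<le> \<rho>" using fP[OF iS] fP[OF jS] eq c_def by auto
    have cS: "c \<in> S" using c CsS by auto
    have "d i j \<le> d i c + d c j" using tri[OF iS cS jS] .
    moreover have "d j i \<le> d j c + d c i" using tri[OF jS cS iS] .
    moreover have "d c j = d j c" "d c i = d i c" using sym cS iS jS by auto
    ultimately have "d i j \<le> 2*\<rho>" "d j i \<le> 2*\<rho>" using c by auto
    with sep i j ne show False by fastforce
  qed
  have "card (C \<inter> A) \<le> card (Cs \<inter> A)"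
    by (rule card_inj_on_le[OF inj img]) (use fin CsS in \<open>auto intro: finite_subset\<close>)
  with k show ?thesis by simp
qed

theorem lemma3:
  fixes S S1 S2 \<Gamma>1 \<Gamma>2 :: "'a set" and d :: "'a \<Rightarrow> 'a \<Rightarrow> real"
    and k1 k2 :: nat and r :: ereal and order :: "'a list"
  assumes "finite S" and "metric_on S d"
    and "S = S1 \<union> S2" and "S1 \<inter> S2 = {}"
    and "r = opt_radius d S S1 k1 S2 k2"
    and "independent_center_set d (2 * r) S1 \<Gamma>1"
    and "independent_center_set d (2 * r) S2 \<Gamma>2"
    and "card \<Gamma>1 > k1" and "card \<Gamma>2 > k2"
    and "distinct order" and "set order = isolated_vertices d r \<Gamma>1 \<Gamma>2"
  shows "card (phase1 d r order \<inter> S1) \<le> k1 \<and> card (phase1 d r order \<inter> S2) \<le> k2"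
proof -
  note fin = assms(1) and met = assms(2) and SS = assms(3) and disj = assms(4)
    and rdef = assms(5) and I1 = assms(6) and I2 = assms(7)
  define C where "C = phase1 d r order"
  have inv: "(\<forall>x\<in>C. \<forall>y\<in>C. x \<noteq> y \<longrightarrow> ereal (d x y) > 2*r \<or> ereal (d y x) > 2*r)
         \<and> C \<subseteq> set order"
    using phase1_inv[where Z="{}" and d=d and r=r and xs=order] unfolding C_def phase1_def by simp
  have G1: "\<Gamma>1 \<subseteq> S1" and G2: "\<Gamma>2 \<subseteq> S2"
    using I1 I2 unfolding independent_center_set_def by auto
  have cov1: "\<forall>p\<in>S1. \<exists>q\<in>\<Gamma>1. ereal (d p q) \<le> 2*r"
    and cov2: "\<forall>p\<in>S2. \<exists>q\<in>\<Gamma>2. ereal (d p q) \<le> 2*r"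
    using I1 I2 unfolding independent_center_set_def by auto
  have ne1: "\<Gamma>1 \<noteq> {}" and ne2: "\<Gamma>2 \<noteq> {}" using assms(8,9) by auto
  then have Sne: "S \<noteq> {}" using G1 SS by auto
  have CI: "C \<subseteq> isolated_vertices d r \<Gamma>1 \<Gamma>2" using inv assms(11) by auto
  define F where "F = {C. fair_feasible S S1 k1 S2 k2 C}"
  have Ffin: "finite F" unfolding F_def fair_feasible_def
    by (rule finite_subset[of _ "Pow S"]) (use fin in auto)
  have "{} \<in> F" unfolding F_def fair_feasible_def by simp
  then have Fne: "F \<noteq> {}" by blast
  obtain Cs where Cs: "Cs \<in> F" and rC: "r = kcenter_cost d S Cs"
    using ereal_INF_attained[OF Ffin Fne, of "kcenter_cost d S"] rdef
    unfolding opt_radius_def F_def by auto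
  have CsS: "Cs \<subseteq> S" and k1: "card (Cs \<inter> S1) \<le> k1" and k2: "card (Cs \<inter> S2) \<le> k2"
    using Cs unfolding F_def fair_feasible_def by auto
  have dsle: "dist_set d s Cs \<le> r" if "s \<in> S" for s
    unfolding rC kcenter_cost_def using that by (rule SUP_upper)
  show ?thesis
  proof (cases r)
    case PInf
    have "isolated_vertices d r \<Gamma>1 \<Gamma>2 = {}"
    proof -
      obtain q2 where q2: "q2 \<in> \<Gamma>2" using ne2 by auto
      obtain q1 where q1: "q1 \<in> \<Gamma>1" using ne1 by auto
      have "\<forall>i\<in>\<Gamma>1 \<union> \<Gamma>2. \<exists>j\<in>\<Gamma>1 \<union> \<Gamma>2. aux_edge d r \<Gamma>1 \<Gamma>2 i j"
      proof
        fix i assume "i \<in> \<Gamma>1 \<union> \<Gamma>2"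
        then show "\<exists>j\<in>\<Gamma>1 \<union> \<Gamma>2. aux_edge d r \<Gamma>1 \<Gamma>2 i j"
          using q1 q2 PInf unfolding aux_edge_def by auto
      qed
      then show ?thesis unfolding isolated_vertices_def by auto
    qed
    then have "C = {}" using CI by auto
    then show ?thesis unfolding C_def by simp
  next
    case MInf
    obtain s where s: "s \<in> S" using Sne by auto
    have Csne: "Cs \<noteq> {}"
    proof
      assume "Cs = {}"
      then have "dist_set d s Cs = \<infinity>" unfolding dist_set_def by (simp add: top_ereal_def)
      with dsle[OF s] MInf show False by simp
    qed
    have "finite Cs" using CsS fin by (rule finite_subset)
    from ereal_INF_attained[OF this Csne, of "\<lambda>c. ereal (d s c)"] obtain c
      where "dist_set d s Cs = ereal (d s c)" unfolding dist_set_def by auto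
    with dsle[OF s] MInf show ?thesis by simp
  next
    case (real \<rho>)
    have cover: "\<forall>s\<in>S. \<exists>c\<in>Cs. d s c \<le> \<rho>"
    proof
      fix s assume s: "s \<in> S"
      have Csne: "Cs \<noteq> {}"
      proof
        assume "Cs = {}"
        then have "dist_set d s Cs = \<infinity>" unfolding dist_set_def by (simp add: top_ereal_def)
        with dsle[OF s] real show False by simp
      qed
      have "finite Cs" using CsS fin by (rule finite_subset)
      from ereal_INF_attained[OF this Csne, of "\<lambda>c. ereal (d s c)"] obtain c
        where "c \<in> Cs" "dist_set d s Cs = ereal (d s c)" unfolding dist_set_def by auto
      with dsle[OF s] real show "\<exists>c\<in>Cs. d s c \<le> \<rho>" by auto
    qed
    have sym: "\<And>x y. x\<in>S \<Longrightarrow> y\<in>S \<Longrightarrow> d x y = d y x"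
      using met unfolding metric_on_def by blast
    have CS: "C \<subseteq> S" using CI G1 G2 SS unfolding isolated_vertices_def by auto
    have sep: "\<forall>x\<in>C. \<forall>y\<in>C. x \<noteq> y \<longrightarrow> d x y > 2*\<rho> \<or> d y x > 2*\<rho>"
      using inv real by auto
    have cov1': "\<forall>p\<in>S1. \<exists>q\<in>\<Gamma>1. d p q \<le> 2*\<rho>" using cov1 real by auto
    have cov2': "\<forall>p\<in>S2. \<exists>q\<in>\<Gamma>2. d p q \<le> 2*\<rho>" using cov2 real by auto
    have far1: "\<forall>i\<in>C\<inter>S1. \<forall>q\<in>\<Gamma>2. d i q > 3*\<rho>"
    proof (intro ballI)
      fix i q assume i: "i \<in> C \<inter> S1" and q: "q \<in> \<Gamma>2"
      have "i \<in> \<Gamma>1" using i CI G2 disj unfolding isolated_vertices_def by auto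
      with i q CI have "\<not> (ereal (d i q) \<le> 3 * r)"
        unfolding isolated_vertices_def aux_edge_def by auto
      then show "d i q > 3*\<rho>" using real by auto
    qed
    have far2: "\<forall>i\<in>C\<inter>S2. \<forall>q\<in>\<Gamma>1. d i q > 3*\<rho>"
    proof (intro ballI)
      fix i q assume i: "i \<in> C \<inter> S2" and q: "q \<in> \<Gamma>1"
      have "i \<in> \<Gamma>2" using i CI G1 disj unfolding isolated_vertices_def by auto
      with i q CI have "\<not> (ereal (d q i) \<le> 3 * r)"
        unfolding isolated_vertices_def aux_edge_def by auto
      moreover have "d q i = d i q" using sym i q G1 SS CS by auto
      ultimately show "d i q > 3*\<rho>" using real by auto
    qed
    have "card (C \<inter> S1) \<le> k1"
      by (rule side[OF met SS CsS fin cover _ cov2' CS far1 sep k1]) (use G2 SS in auto)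
    moreover have "card (C \<inter> S2) \<le> k2"
      by (rule side[OF met _ CsS fin cover _ cov1' CS far2 sep k2]) (use G1 SS in auto)
    ultimately show ?thesis unfolding C_def by simp
  qed
qed

end
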